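(* Let $\ell\ge 1$ and $w\ge 0$ be integers, and let $A=\langle A_1,\dots,A_\ell\rangle$ and $B=\langle B_1,\dots,B_\ell\rangle$ be real sequences. Let $i,j\in\{1,\dots,\ell\}$ with $i-w\le j\le i+w$, so that $(i,j)$ is an alignment permitted by the window $w$. If $B_j<\mathbb{L}^{\Omega}_j$, then either $A_i>\mathbb{U}^B_i\ge B_j$ or $\mathbb{U}^B_i\ge A_i\ge B_j\ge \mathbb{L}^B_i$.
   Context: For a real sequence $S=\langle S_1,\dots,S_\ell\rangle$ and window $w$, the upper and lower envelopes are the sequences $\mathbb{U}^S_i=\max_{\max(1,i-w)\le j\le \min(\ell,i+w)} S_j$ and $\mathbb{L}^S_i=\min_{\max(1,i-w)\le j\le \min(\ell,i+w)} S_j$ for $1\le i\le\ell$. The projection $\Omega=\Omega_w(A,B)$ of $A$ onto $B$ is the sequence with $\Omega_i=\mathbb{U}^B_i$ if $A_i>\mathbb{U}^B_i$, $\Omega_i=\mathbb{L}^B_i$ if $A_i<\mathbb{L}^B_i$, and $\Omega_i=A_i$ otherwise. $\mathbb{U}^{\Omega}$ and $\mathbb{L}^{\Omega}$ denote the upper and lower envelopes (with the same window $w$) of $\Omega$. *)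

theory Defs
  imports Complex_Main
begin

text \<open>Sequences S = S_1..S_l are modelled as functions nat => real, only the
values at indices 1..l are relevant.\<close>

definition win :: "nat \<Rightarrow> nat \<Rightarrow> nat \<Rightarrow> nat set" where
  "win l w i = {j. max 1 (int i - int w) \<le> int j \<and> int j \<le> min (int l) (int i + int w)}"

definition upper_env :: "nat \<Rightarrow> nat \<Rightarrow> (nat \<Rightarrow> real) \<Rightarrow> nat \<Rightarrow> real" where
  "upper_env l w S i = Max (S ` win l w i)"

definition lower_env :: "nat \<Rightarrow> nat \<Rightarrow> (nat \<Rightarrow> real) \<Rightarrow> nat \<Rightarrow> real" where
  "lower_env l w S i = Min (S ` win l w i)"

definition projection :: "nat \<Rightarrow> nat \<Rightarrow> (nat \<Rightarrow> real) \<Rightarrow> (nat \<Rightarrow> real) \<Rightarrow> nat \<Rightarrow> real" where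
  "projection l w A B i =
     (if A i > upper_env l w B i then upper_env l w B i
      else if A i < lower_env l w B i then lower_env l w B i
      else A i)"

end

theory Submission
  imports Defs
begin

lemma win_fin: "finite (win l w i)"
proof -
  have "win l w i \<subseteq> {..l}" unfolding win_def by auto
  thus ?thesis by (rule finite_subset) auto
qed

theorem mainTheorem2:
  fixes l w i j :: nat and A B :: "nat \<Rightarrow> real"
  assumes "l \<ge> 1"
    and "i \<in> {1..l}" and "j \<in> {1..l}"
    and "int i - int w \<le> int j" and "int j \<le> int i + int w"
    and "B j < lower_env l w (projection l w A B) j"
  shows "(A i > upper_env l w B i \<and> upper_env l w B i \<ge> B j)
       \<or> (upper_env l w B i \<ge> A i \<and> A i \<ge> B j \<and> B j \<ge> lower_env l w B i)"
proof -
  have ij: "i \<in> win l w j" using assms(2-5) unfolding win_def by auto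
  have ji: "j \<in> win l w i" using assms(2-5) unfolding win_def by auto
  have "lower_env l w (projection l w A B) j \<le> projection l w A B i"
    unfolding lower_env_def using ij win_fin by (intro Min_le) auto
  hence P: "B j < projection l w A B i" using assms(6) by linarith
  have U: "B j \<le> upper_env l w B i"
    unfolding upper_env_def using ji win_fin by (intro Max_ge) auto
  have L: "lower_env l w B i \<le> B j"
    unfolding lower_env_def using ji win_fin by (intro Min_le) auto
  show ?thesis using P U L unfolding projection_def by (auto split: if_splits)
qed

end
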